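(* Let $\pi=(\pi_1,\ldots,\pi_n)$ be a permutation of $\{1,\ldots,n\}$ that is convex, i.e. $\pi_2-\pi_1\le\pi_3-\pi_2\le\cdots\le\pi_n-\pi_{n-1}$, and let $P$ be its permutation matrix. Then for each $k\le n$, the set $I_k(P)$ of rows of $P$ containing a $1$ in one of the first $k$ columns (equivalently $I_k(P)=\{i:\pi_i\le k\}$) is an interval of length $k$, i.e. a set of $k$ consecutive integers.
   Context: The permutation matrix $P$ of $\pi$ is the $n\times n$ $(0,1)$-matrix with $1$ in positions $(i,\pi_i)$. An interval in $\{1,\ldots,n\}$ is a set $\{k,k+1,\ldots,l\}$ with $1\le k\le l\le n$; its length is $l-k+1$. *)

theory Defs
  imports "HOL-Combinatorics.Permutations"
begin

text \<open>A permutation pi of {1..n} is a function nat => nat with pi permutes {1..n};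
  its i-th entry pi_i is pi i.\<close>

definition convex_perm :: "nat \<Rightarrow> (nat \<Rightarrow> nat) \<Rightarrow> bool" where
  "convex_perm n \<pi> \<longleftrightarrow>
     (\<forall>i. 2 \<le> i \<and> i + 1 \<le> n \<longrightarrow>
        int (\<pi> i) - int (\<pi> (i - 1)) \<le> int (\<pi> (i + 1)) - int (\<pi> i))"

definition perm_matrix :: "(nat \<Rightarrow> nat) \<Rightarrow> nat \<Rightarrow> nat \<Rightarrow> nat" where
  "perm_matrix \<pi> i j = (if \<pi> i = j then 1 else 0)"

definition I_rows :: "nat \<Rightarrow> nat \<Rightarrow> (nat \<Rightarrow> nat \<Rightarrow> nat) \<Rightarrow> nat set" where
  "I_rows n k P = {i \<in> {1..n}. \<exists>j \<in> {1..k}. P i j = 1}"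

definition is_interval_len :: "nat \<Rightarrow> nat \<Rightarrow> nat set \<Rightarrow> bool" where
  "is_interval_len n len S \<longleftrightarrow>
     (\<exists>a l. 1 \<le> a \<and> a \<le> l \<and> l \<le> n \<and> S = {a..l} \<and> l + 1 - a = len)"

end

theory Submission
  imports Defs
begin

theorem lemma4p2:
  fixes n k :: nat and \<pi> :: "nat \<Rightarrow> nat"
  assumes "\<pi> permutes {1..n}"
    and "convex_perm n \<pi>"
    and "1 \<le> k" and "k \<le> n"
  shows "is_interval_len n k (I_rows n k (perm_matrix \<pi>))"
proof -
  define f where "f m = int (\<pi> m)" for m
  define d where "d m = f (m+1) - f m" for m
  have dstep: "d a \<le> d (a+1)" if "1 \<le> a" "a + 2 \<le> n" for a
    using assms(2) that unfolding convex_perm_def d_def f_def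
    by (metis (no_types, lifting) add_diff_cancel_right' add_le_imp_le_diff le_add_diff_inverse2
        le_diff_conv nat_1_add_1 one_add_one add.assoc)
  have dmono: "d a \<le> d b" if "1 \<le> a" "a \<le> b" "b + 1 \<le> n" for a b
    using that(2,3)
  proof (induction b rule: dec_induct)
    case base then show ?case by simp
  next
    case (step m)
    have "d m \<le> d (m+1)" using \<open>1 \<le> a\<close> step.hyps step.prems by (intro dstep) auto
    then show ?case using step by auto
  qed
  have lemA: "f j \<le> f l" if "d (j-1) > 0" "2 \<le> j" "j \<le> l" "l \<le> n" for j l
    using that(3,4)
  proof (induction l rule: dec_induct)
    case base then show ?case by simp
  next
    case (step m)
    have "d (j-1) \<le> d m" using that(2) step by (intro dmono) auto
    then show ?case using step that(1) unfolding d_def by auto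
  qed
  have lemB: "f j \<le> f i" if "d (j-1) \<le> 0" "1 \<le> i" "i \<le> j" "j \<le> n" for i j
    using that(3)
  proof (induction i rule: inc_induct)
    case base then show ?case by simp
  next
    case (step m)
    have "d m \<le> d (j-1)" using that step by (intro dmono) auto
    then show ?case using step that(1) unfolding d_def by auto
  qed
  define S where "S = {i \<in> {1..n}. \<pi> i \<le> k}"
  have perm_in: "\<pi> i \<in> {1..n}" if "i \<in> {1..n}" for i
    using permutes_in_image[OF assms(1)] that by blast
  have IS: "I_rows n k (perm_matrix \<pi>) = S"
    proof -
    have "(\<exists>j\<in>{1..k}. perm_matrix \<pi> i j = 1) \<longleftrightarrow> \<pi> i \<le> k" if "i \<in> {1..n}" for i
    proof
      assume "\<exists>j\<in>{1..k}. perm_matrix \<pi> i j = 1"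
      then obtain j where "j \<in> {1..k}" "perm_matrix \<pi> i j = 1" by blast
      then show "\<pi> i \<le> k" unfolding perm_matrix_def by (cases "\<pi> i = j") auto
    next
      assume "\<pi> i \<le> k"
      moreover have "1 \<le> \<pi> i" using perm_in[OF that] by simp
      ultimately have "\<pi> i \<in> {1..k}" by simp
      moreover have "perm_matrix \<pi> i (\<pi> i) = 1" unfolding perm_matrix_def by simp
      ultimately show "\<exists>j\<in>{1..k}. perm_matrix \<pi> i j = 1" by blast
    qed
    then show ?thesis unfolding I_rows_def S_def by (intro Collect_cong) blast
  qed
  have conv: "j \<in> S" if "i \<in> S" "l \<in> S" "i \<le> j" "j \<le> l" for i j l
  proof -
    have j: "1 \<le> j" "j \<le> n" using that unfolding S_def by auto
    show ?thesis
    proof (cases "i = j")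
      case True then show ?thesis using that by simp
    next
      case False
      hence "2 \<le> j" using that unfolding S_def by auto
      show ?thesis
      proof (cases "d (j-1) > 0")
        case True
        have "f j \<le> f l" using lemA[OF True \<open>2 \<le> j\<close> that(4)] that(2) unfolding S_def by auto
        then show ?thesis using that(2) j unfolding S_def f_def by auto
      next
        case False
        have "f j \<le> f i" using lemB[of j i] False that j unfolding S_def by auto
        then show ?thesis using that(1) j unfolding S_def f_def by auto
      qed
    qed
  qed
  have bij: "bij_betw \<pi> {1..n} {1..n}" using assms(1) by (rule permutes_imp_bij)
  have img: "\<pi> ` S = {1..k}"
  proof
    show "\<pi> ` S \<subseteq> {1..k}"
    proof
      fix y assume "y \<in> \<pi> ` S"
      then obtain i where i: "i \<in> S" "y = \<pi> i" by blast
      then have "i \<in> {1..n}" "\<pi> i \<le> k" unfolding S_def by simp_all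
      then show "y \<in> {1..k}" using perm_in[of i] i(2) by simp
    qed
    show "{1..k} \<subseteq> \<pi> ` S"
    proof
      fix x assume x: "x \<in> {1..k}"
      then have "x \<in> {1..n}" using assms(4) by simp
      then have "x \<in> \<pi> ` {1..n}" using bij unfolding bij_betw_def by simp
      then obtain i where i: "i \<in> {1..n}" "x = \<pi> i" by blast
      then have "i \<in> S" using x unfolding S_def by simp
      then show "x \<in> \<pi> ` S" using i(2) by blast
    qed
  qed
  have "S \<subseteq> {1..n}" unfolding S_def by blast
  then have injS: "inj_on \<pi> S" using bij unfolding bij_betw_def using inj_on_subset by blast
  have cardS: "card S = k" using card_image[OF injS] img by simp
  have finS: "finite S" unfolding S_def by simp
  have neS: "S \<noteq> {}" using cardS assms(3) by (metis card.empty not_one_le_zero)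
  define a where "a = Min S"
  define b where "b = Max S"
  have aS: "a \<in> S" and bS: "b \<in> S" using finS neS unfolding a_def b_def by auto
  have Seq: "S = {a..b}"
  proof
    show "S \<subseteq> {a..b}" using finS unfolding a_def b_def by auto
    show "{a..b} \<subseteq> S" using conv[OF aS bS] by (simp add: subset_iff)
  qed
  have ab: "a \<le> b" using Seq aS by auto
  have "b + 1 - a = k" using cardS Seq ab by simp
  moreover have "1 \<le> a" "b \<le> n" using aS bS unfolding S_def by auto
  ultimately show ?thesis unfolding is_interval_len_def IS using Seq ab by blast
qed

end
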